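(* Let $(S,V)$ be a marked surface with a topological triangulation $\mathcal{T}$. Define $L_f\colon \mathbb{R}_{>1}^{E(\mathcal{T})}\times\mathbb{R}_{>0}^V\to\mathbb{R}_{>0}^{E(\mathcal{T})}$ by $L_f(\mathbf{I},\mathbf{r})(e_{ij})=\sqrt{r_i^2+r_j^2+2I_{ij}r_ir_j}$, where $e_{ij}$ is an edge joining $v_i,v_j$ and $I_{ij}=\mathbf{I}(e_{ij})$, $r_i=\mathbf{r}(v_i)$. Let $\mathbb{R}^{E(\mathcal{T})}_\Delta=\{\mathbf{x}\in\mathbb{R}^{E(\mathcal{T})}: \text{for every face } f_{ijk},\ 0<x(e_{ij})<x(e_{jk})+x(e_{ki})\}$ and $Q_f(\mathcal{T})=L_f^{-1}(\mathbb{R}^{E(\mathcal{T})}_\Delta)$. Then the map $\tilde L_f\colon Q_f(\mathcal{T})\to\mathbb{R}^{E(\mathcal{T})}_\Delta\times\mathbb{R}^V_{>0}$, $(\mathbf{I},\mathbf{r})\mapsto(L_f(\mathbf{I},\mathbf{r}),\mathbf{r})$, is injective, and hence a real analytic homeomorphism from its domain onto its image.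
   Context: A marked surface $(S,V)$ is a closed oriented surface $S$ with a nonempty finite set $V=\{v_1,\dots,v_n\}$ such that $\chi(S\setminus V)<0$. A (topological) triangulation is a $\Delta$-complex decomposition of $S$ (cells may be glued to themselves) whose set of $0$-cells is $V$, considered up to isotopy fixing $V$; $E(\mathcal{T})$ and $F(\mathcal{T})$ denote its edges and faces. For a finite set $A$, $\mathbb{R}^A$ is the space of real functions on $A$. *)

theory Defs
  imports "HOL-Analysis.Analysis"
begin

text \<open>Combinatorial data of a triangulation: vertices are the elements of the finite
type 'v, edges of 'e, faces of 'f.  ends e = (i,j) are the endpoints of edge e
(possibly i = j, as Delta-complexes allow self-gluing); fedges f = (a,b,c)
are the three edges of face f, with a joining v_i v_j, b joining v_j v_k, c joining v_k v_i.\<close>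

definition joins :: "('e \<Rightarrow> 'v \<times> 'v) \<Rightarrow> 'e \<Rightarrow> 'v \<Rightarrow> 'v \<Rightarrow> bool" where
  "joins ends e i j \<longleftrightarrow> ends e = (i, j) \<or> ends e = (j, i)"

definition triangulation_data ::
  "('e::finite \<Rightarrow> 'v::finite \<times> 'v) \<Rightarrow> ('f::finite \<Rightarrow> 'e \<times> 'e \<times> 'e) \<Rightarrow> bool" where
  "triangulation_data ends fedges \<longleftrightarrow>
     \<comment> \<open>each face is a triangle with vertices v_i, v_j, v_k\<close>
     (\<forall>f. \<exists>i j k. joins ends (fst (fedges f)) i j \<and> joins ends (fst (snd (fedges f))) j k
                   \<and> joins ends (snd (snd (fedges f))) k i)
     \<comment> \<open>closed surface: every edge occurs exactly twice among the sides of faces\<close>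
   \<and> (\<forall>e. card {f. fst (fedges f) = e} + card {f. fst (snd (fedges f)) = e}
            + card {f. snd (snd (fedges f)) = e} = 2)
     \<comment> \<open>chi(S - V) = |V| - |E| + |F| - |V| < 0\<close>
   \<and> int CARD('f) - int CARD('e) < 0"

definition Lf :: "('e::finite \<Rightarrow> 'v::finite \<times> 'v) \<Rightarrow> real^'e \<Rightarrow> real^'v \<Rightarrow> real^'e" where
  "Lf ends I r = (\<chi> e. let (i, j) = ends e in
       sqrt ((r$i)\<^sup>2 + (r$j)\<^sup>2 + 2 * I$e * r$i * r$j))"

definition RDelta :: "('f::finite \<Rightarrow> 'e \<times> 'e \<times> 'e) \<Rightarrow> (real^'e::finite) set" where
  "RDelta fedges = {x. \<forall>f. let (a, b, c) = fedges f in
       0 < x$a \<and> x$a < x$b + x$c \<and>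
       0 < x$b \<and> x$b < x$c + x$a \<and>
       0 < x$c \<and> x$c < x$a + x$b}"

definition Qf :: "('e::finite \<Rightarrow> 'v::finite \<times> 'v) \<Rightarrow> ('f::finite \<Rightarrow> 'e \<times> 'e \<times> 'e)
                   \<Rightarrow> ((real^'e) \<times> (real^'v)) set" where
  "Qf ends fedges = {(I, r). (\<forall>e. I$e > 1) \<and> (\<forall>v. r$v > 0) \<and> Lf ends I r \<in> RDelta fedges}"

definition Lf_tilde :: "('e::finite \<Rightarrow> 'v::finite \<times> 'v) \<Rightarrow> (real^'e) \<times> (real^'v) \<Rightarrow> (real^'e) \<times> (real^'v)" where
  "Lf_tilde ends = (\<lambda>(I, r). (Lf ends I r, r))"

text \<open>Real analyticity of a map between Euclidean spaces: near every point of U it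
is the sum of an (unconditionally, hence absolutely) convergent power series in the
coordinates with respect to the standard basis.\<close>
definition real_analytic_on ::
  "'a::euclidean_space set \<Rightarrow> ('a \<Rightarrow> 'b::euclidean_space) \<Rightarrow> bool" where
  "real_analytic_on U f \<longleftrightarrow>
     (\<forall>x0\<in>U. \<exists>\<rho>>0. \<exists>c :: ('a \<Rightarrow> nat) \<Rightarrow> 'b.
        \<forall>x\<in>ball x0 \<rho>.
          ((\<lambda>\<alpha>. (\<Prod>b\<in>Basis. ((x - x0) \<bullet> b) ^ \<alpha> b) *\<^sub>R c \<alpha>) has_sum f x)
            {\<alpha>. \<forall>b. b \<notin> Basis \<longrightarrow> \<alpha> b = 0})"

end

theory Submission
  imports Defs
begin

definition MI :: "('a::euclidean_space \<Rightarrow> nat) set" where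
  "MI = {\<alpha>. \<forall>b. b \<notin> Basis \<longrightarrow> \<alpha> b = 0}"

definition mon :: "'a::euclidean_space \<Rightarrow> 'a \<Rightarrow> ('a \<Rightarrow> nat) \<Rightarrow> real" where
  "mon x0 x \<alpha> = (\<Prod>b\<in>Basis. ((x - x0) \<bullet> b) ^ \<alpha> b)"

definition pw :: "real \<Rightarrow> ('a::euclidean_space \<Rightarrow> nat) \<Rightarrow> real" where
  "pw \<rho> \<alpha> = (\<Prod>b\<in>Basis. \<rho> ^ \<alpha> b)"

definition fib :: "('a::euclidean_space \<Rightarrow> nat) \<Rightarrow> (('a \<Rightarrow> nat) \<times> ('a \<Rightarrow> nat)) set" where
  "fib \<gamma> = {(\<alpha>, \<beta>). \<alpha> \<in> MI \<and> \<beta> \<in> MI \<and> (\<lambda>b. \<alpha> b + \<beta> b) = \<gamma>}"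

definition conv :: "(('a::euclidean_space \<Rightarrow> nat) \<Rightarrow> real) \<Rightarrow> (('a \<Rightarrow> nat) \<Rightarrow> real) \<Rightarrow> ('a \<Rightarrow> nat) \<Rightarrow> real" where
  "conv a b \<gamma> = (\<Sum>(\<alpha>, \<beta>)\<in>fib \<gamma>. a \<alpha> * b \<beta>)"

lemma finite_below:
  "finite {\<alpha>\<in>(MI::('a::euclidean_space\<Rightarrow>nat) set). \<forall>b. \<alpha> b \<le> \<gamma> b}"
proof (rule inj_on_finite[where f="\<lambda>\<alpha>. restrict \<alpha> Basis" and B="PiE Basis (\<lambda>b. {..\<gamma> b})"])
  show "inj_on (\<lambda>\<alpha>. restrict \<alpha> Basis) {\<alpha>\<in>(MI::('a::euclidean_space\<Rightarrow>nat) set). \<forall>b. \<alpha> b \<le> \<gamma> b}"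
  proof (rule inj_onI)
    fix \<alpha> \<beta> :: "'a \<Rightarrow> nat"
    assume h: "\<alpha> \<in> {\<alpha>\<in>MI. \<forall>b. \<alpha> b \<le> \<gamma> b}" "\<beta> \<in> {\<alpha>\<in>MI. \<forall>b. \<alpha> b \<le> \<gamma> b}"
      "restrict \<alpha> Basis = restrict \<beta> Basis"
    show "\<alpha> = \<beta>"
    proof
      fix b
      show "\<alpha> b = \<beta> b"
      proof (cases "b \<in> Basis")
        case True
        then show ?thesis using fun_cong[OF h(3), of b] by simp
      next
        case False
        then show ?thesis using h(1,2) by (simp add: MI_def)
      qed
    qed
  qed
  show "(\<lambda>\<alpha>. restrict \<alpha> Basis) ` {\<alpha>\<in>(MI::('a::euclidean_space\<Rightarrow>nat) set). \<forall>b. \<alpha> b \<le> \<gamma> b}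
     \<subseteq> PiE Basis (\<lambda>b. {..\<gamma> b})" by (rule image_subsetI) (simp add: restrict_PiE_iff)
  show "finite (PiE (Basis::'a set) (\<lambda>b. {..\<gamma> b}))" by (rule finite_PiE) auto
qed

lemma finite_fib: "finite (fib \<gamma>)"
proof -
  let ?S = "{\<alpha>\<in>MI. \<forall>b. \<alpha> b \<le> \<gamma> b}"
  have "fib \<gamma> \<subseteq> ?S \<times> ?S"
  proof
    fix p assume "p \<in> fib \<gamma>"
    then obtain \<alpha> \<beta> where p: "p = (\<alpha>, \<beta>)" "\<alpha> \<in> MI" "\<beta> \<in> MI" "(\<lambda>b. \<alpha> b + \<beta> b) = \<gamma>"
      unfolding fib_def by blast
    thus "p \<in> ?S \<times> ?S" by auto
  qed
  moreover have "finite (?S \<times> ?S)" by (intro finite_cartesian_product finite_below)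
  ultimately show ?thesis by (rule finite_subset)
qed

lemma MI_add: "\<alpha> \<in> MI \<Longrightarrow> \<beta> \<in> MI \<Longrightarrow> (\<lambda>b. \<alpha> b + \<beta> b) \<in> MI"
  by (simp add: MI_def)

lemma mon_add: "mon x0 x (\<lambda>b. \<alpha> b + \<beta> b) = mon x0 x \<alpha> * mon x0 x \<beta>"
  by (simp add: mon_def power_add prod.distrib)

lemma pw_add: "pw \<rho> (\<lambda>b. \<alpha> b + \<beta> b) = pw \<rho> \<alpha> * pw \<rho> \<beta>"
  by (simp add: pw_def power_add prod.distrib)

lemma pw_nonneg: "\<rho> \<ge> 0 \<Longrightarrow> pw \<rho> \<alpha> \<ge> 0"
  by (simp add: pw_def prod_nonneg)

lemma pw_pos: "\<rho> > 0 \<Longrightarrow> pw \<rho> \<alpha> > 0"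
  by (simp add: pw_def prod_pos)

lemma pw_mono: "0 \<le> \<sigma> \<Longrightarrow> \<sigma> \<le> \<rho> \<Longrightarrow> pw \<sigma> \<alpha> \<le> pw \<rho> \<alpha>"
  unfolding pw_def by (intro prod_mono) (auto intro: power_mono)

lemma abs_mon_le:
  assumes "\<forall>b\<in>Basis. \<bar>(x - x0) \<bullet> b\<bar> \<le> \<rho>"
  shows "\<bar>mon x0 x \<alpha>\<bar> \<le> pw \<rho> \<alpha>"
  unfolding mon_def pw_def abs_prod power_abs
  using assms by (intro prod_mono) (auto intro: power_mono)

definition zmi :: "'a::euclidean_space \<Rightarrow> nat" where "zmi = (\<lambda>_. 0)"

lemma zmi_MI[simp]: "zmi \<in> MI" by (simp add: MI_def zmi_def)

lemma mon_zmi[simp]: "mon x0 x zmi = 1" by (simp add: mon_def zmi_def)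
lemma pw_zmi[simp]: "pw \<rho> zmi = 1" by (simp add: pw_def zmi_def)

lemma mon_at_center: "\<alpha> \<in> MI \<Longrightarrow> \<alpha> \<noteq> zmi \<Longrightarrow> mon x0 x0 \<alpha> = 0"
proof -
  assume a: "\<alpha> \<in> MI" "\<alpha> \<noteq> zmi"
  then obtain b where b: "\<alpha> b \<noteq> 0" by (auto simp: zmi_def fun_eq_iff)
  with a have "b \<in> Basis" by (auto simp: MI_def)
  thus ?thesis using b unfolding mon_def by (intro prod_zero) auto
qed

lemma has_sum_single_zmi:
  "((\<lambda>\<alpha>. if \<alpha> = zmi then k else 0) has_sum k) MI"
  by (rule has_sum_finite_neutralI[where B="{zmi}"]) auto

lemma has_sum_diff':
  fixes f g :: "'b \<Rightarrow> real"
  shows "(f has_sum a) A \<Longrightarrow> (g has_sum b) A \<Longrightarrow> ((\<lambda>x. f x - g x) has_sum (a - b)) A"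
proof -
  assume "(f has_sum a) A" "(g has_sum b) A"
  moreover have "((\<lambda>x. - g x) has_sum -b) A" using \<open>(g has_sum b) A\<close> by (simp add: has_sum_uminus)
  ultimately show ?thesis using has_sum_add by fastforce
qed

lemma cauchy:
  fixes a b :: "('a::euclidean_space \<Rightarrow> nat) \<Rightarrow> real"
  assumes ha: "(a has_sum A) MI" and hb: "(b has_sum B) MI"
  shows "((\<lambda>\<gamma>. \<Sum>(\<alpha>, \<beta>)\<in>fib \<gamma>. a \<alpha> * b \<beta>) has_sum A * B) MI"
proof -
  have sa: "(\<lambda>\<alpha>. \<bar>a \<alpha>\<bar>) summable_on MI"
    using ha summable_on_iff_abs_summable_on_real[of a MI] by (auto simp: summable_on_def)
  have sb: "(\<lambda>\<alpha>. \<bar>b \<alpha>\<bar>) summable_on MI"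
    using hb summable_on_iff_abs_summable_on_real[of b MI] by (auto simp: summable_on_def)
  let ?f = "\<lambda>p. a (fst p) * b (snd p)"
  have "(\<lambda>p. \<bar>a (fst p)\<bar> * \<bar>b (snd p)\<bar>) summable_on Sigma MI (\<lambda>_. MI)"
  proof (rule summable_on_SigmaI[where g="\<lambda>\<alpha>. \<bar>a \<alpha>\<bar> * infsum (\<lambda>\<beta>. \<bar>b \<beta>\<bar>) MI"])
    show "((\<lambda>y. \<bar>a (fst (x, y))\<bar> * \<bar>b (snd (x, y))\<bar>) has_sum \<bar>a x\<bar> * infsum (\<lambda>\<beta>. \<bar>b \<beta>\<bar>) MI) MI" for x
      using has_sum_cmult_right[OF has_sum_infsum[OF sb]] by simp
    show "(\<lambda>\<alpha>. \<bar>a \<alpha>\<bar> * infsum (\<lambda>\<beta>. \<bar>b \<beta>\<bar>) MI) summable_on MI"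
      using summable_on_cmult_left[OF sa] by simp
  qed simp
  hence "?f summable_on MI \<times> MI"
    using summable_on_iff_abs_summable_on_real[of ?f "MI \<times> MI"] by (simp add: abs_mult)
  then have hf: "(?f has_sum infsum ?f (MI \<times> MI)) (MI \<times> MI)" by simp
  have "((\<lambda>\<alpha>. a \<alpha> * B) has_sum infsum ?f (MI \<times> MI)) MI"
    by (rule has_sum_SigmaD[OF hf]) (simp add: has_sum_cmult_right[OF hb])
  moreover have "((\<lambda>\<alpha>. a \<alpha> * B) has_sum A * B) MI" by (rule has_sum_cmult_left[OF ha])
  ultimately have eq: "infsum ?f (MI \<times> MI) = A * B" by (rule has_sum_unique)
  define h where "h = (\<lambda>p::('a\<Rightarrow>nat)\<times>('a\<Rightarrow>nat). ((\<lambda>b. fst p b + snd p b), p))"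
  let ?F = "\<lambda>q::('a\<Rightarrow>nat)\<times>(('a\<Rightarrow>nat)\<times>('a\<Rightarrow>nat)). a (fst (snd q)) * b (snd (snd q))"
  have inj: "inj_on h (MI \<times> MI)" unfolding h_def inj_on_def by auto
  have img: "h ` (MI \<times> MI) = Sigma MI fib"
  proof
    show "h ` (MI \<times> MI) \<subseteq> Sigma MI fib" unfolding h_def fib_def by (auto intro: MI_add)
    show "Sigma MI fib \<subseteq> h ` (MI \<times> MI)"
    proof
      fix q :: "('a\<Rightarrow>nat)\<times>('a\<Rightarrow>nat)\<times>('a\<Rightarrow>nat)" assume "q \<in> Sigma MI fib"
      then obtain \<gamma> \<alpha> \<beta> where q: "q = (\<gamma>, (\<alpha>, \<beta>))" "\<alpha> \<in> MI" "\<beta> \<in> MI" "(\<lambda>b. \<alpha> b + \<beta> b) = \<gamma>"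
        unfolding fib_def by auto
      show "q \<in> h ` (MI \<times> MI)" unfolding h_def using q by (auto intro!: image_eqI[where x="(\<alpha>,\<beta>)"])
    qed
  qed
  have Fh: "?F \<circ> h = ?f" by (simp add: h_def fun_eq_iff)
  have "((?F \<circ> h) has_sum A * B) (MI \<times> MI)" unfolding Fh using hf by (simp only: eq)
  hence "(?F has_sum A * B) (h ` (MI \<times> MI))" by (simp only: has_sum_reindex[OF inj])
  hence SF: "(?F has_sum A * B) (Sigma MI fib)" unfolding img .
  have fibs: "((\<lambda>y. ?F (\<gamma>, y)) has_sum (\<Sum>(\<alpha>, \<beta>)\<in>fib \<gamma>. a \<alpha> * b \<beta>)) (fib \<gamma>)" for \<gamma>
    by (rule has_sum_finiteI[OF finite_fib]) (simp add: case_prod_unfold)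
  show ?thesis by (rule has_sum_SigmaD[OF SF fibs])
qed

definition ANr :: "'a::euclidean_space \<Rightarrow> ('a \<Rightarrow> real) \<Rightarrow> real \<Rightarrow> (('a \<Rightarrow> nat) \<Rightarrow> real) \<Rightarrow> bool" where
  "ANr x0 g \<rho> c \<longleftrightarrow> (\<lambda>\<alpha>. \<bar>c \<alpha>\<bar> * pw \<rho> \<alpha>) summable_on MI \<and>
     (\<forall>x. (\<forall>b\<in>Basis. \<bar>(x - x0) \<bullet> b\<bar> < \<rho>) \<longrightarrow> ((\<lambda>\<alpha>. c \<alpha> * mon x0 x \<alpha>) has_sum g x) MI)"

definition AN :: "'a::euclidean_space \<Rightarrow> ('a \<Rightarrow> real) \<Rightarrow> bool" where
  "AN x0 g \<longleftrightarrow> (\<exists>\<rho>>0. \<exists>c. ANr x0 g \<rho> c)"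

lemma ANr_mono:
  assumes "ANr x0 g \<rho> c" "0 < \<sigma>" "\<sigma> \<le> \<rho>"
  shows "ANr x0 g \<sigma> c"
  unfolding ANr_def
proof (intro conjI allI impI)
  show "(\<lambda>\<alpha>. \<bar>c \<alpha>\<bar> * pw \<sigma> \<alpha>) summable_on MI"
  proof (rule summable_on_comparison_test)
    show "(\<lambda>\<alpha>. \<bar>c \<alpha>\<bar> * pw \<rho> \<alpha>) summable_on MI" using assms(1) by (simp add: ANr_def)
    show "\<bar>c \<alpha>\<bar> * pw \<sigma> \<alpha> \<le> \<bar>c \<alpha>\<bar> * pw \<rho> \<alpha>" for \<alpha>
      using pw_mono[of \<sigma> \<rho> \<alpha>] assms(2,3) by (intro mult_left_mono) auto
    show "0 \<le> \<bar>c \<alpha>\<bar> * pw \<sigma> \<alpha>" for \<alpha> using pw_nonneg[of \<sigma> \<alpha>] assms(2) by simp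
  qed
  fix x :: 'a assume "\<forall>b\<in>Basis. \<bar>(x - x0) \<bullet> b\<bar> < \<sigma>"
  hence "\<forall>b\<in>Basis. \<bar>(x - x0) \<bullet> b\<bar> < \<rho>" using assms(3) by force
  thus "((\<lambda>\<alpha>. c \<alpha> * mon x0 x \<alpha>) has_sum g x) MI" using assms(1) by (simp add: ANr_def)
qed

lemma ANr_center: "ANr x0 g \<rho> c \<Longrightarrow> 0 < \<rho> \<Longrightarrow> g x0 = c zmi"
proof -
  assume a: "ANr x0 g \<rho> c" "0 < \<rho>"
  hence "((\<lambda>\<alpha>. c \<alpha> * mon x0 x0 \<alpha>) has_sum g x0) MI" by (simp add: ANr_def)
  moreover have "((\<lambda>\<alpha>. c \<alpha> * mon x0 x0 \<alpha>) has_sum c zmi) MI"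
    by (rule has_sum_finite_neutralI[where B="{zmi}"]) (auto simp: mon_at_center)
  ultimately show ?thesis by (rule has_sum_unique)
qed

lemma AN_const: "AN x0 (\<lambda>x. k)"
proof -
  let ?c = "\<lambda>\<alpha>. if \<alpha> = zmi then k else 0"
  have "ANr x0 (\<lambda>x. k) 1 ?c"
    unfolding ANr_def
  proof (intro conjI allI impI)
    have "((\<lambda>\<alpha>. \<bar>?c \<alpha>\<bar> * pw 1 \<alpha>) has_sum \<bar>k\<bar>) MI"
      by (rule has_sum_finite_neutralI[where B="{zmi}"]) auto
    thus "(\<lambda>\<alpha>. \<bar>?c \<alpha>\<bar> * pw 1 \<alpha>) summable_on MI" by (rule has_sum_imp_summable)
    fix x :: 'a
    show "((\<lambda>\<alpha>. ?c \<alpha> * mon x0 x \<alpha>) has_sum k) MI"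
      by (rule has_sum_finite_neutralI[where B="{zmi}"]) auto
  qed
  thus ?thesis unfolding AN_def by (intro exI[of _ 1]) auto
qed

lemma AN_coord:
  fixes b0 :: "'a::euclidean_space"
  assumes b0: "b0 \<in> Basis"
  shows "AN x0 (\<lambda>x. x \<bullet> b0)"
proof -
  define \<delta> where "\<delta> = (\<lambda>b::'a. if b = b0 then 1 else (0::nat))"
  have \<delta>MI: "\<delta> \<in> MI" using b0 by (auto simp: MI_def \<delta>_def)
  have \<delta>z: "\<delta> \<noteq> zmi" by (auto simp: \<delta>_def zmi_def fun_eq_iff)
  have mon\<delta>: "mon x0 x \<delta> = (x - x0) \<bullet> b0" for x
  proof -
    have "mon x0 x \<delta> = (\<Prod>b\<in>Basis. if b = b0 then (x - x0) \<bullet> b else 1)"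
      unfolding mon_def \<delta>_def by (intro prod.cong) auto
    also have "\<dots> = (x - x0) \<bullet> b0" using b0 by (simp add: prod.delta)
    finally show ?thesis .
  qed
  have pw\<delta>: "pw 1 \<delta> = 1" by (simp add: pw_def)
  let ?c = "\<lambda>\<alpha>. if \<alpha> = zmi then x0 \<bullet> b0 else if \<alpha> = \<delta> then 1 else 0"
  have "ANr x0 (\<lambda>x. x \<bullet> b0) 1 ?c"
    unfolding ANr_def
  proof (intro conjI allI impI)
    have "((\<lambda>\<alpha>. \<bar>?c \<alpha>\<bar> * pw 1 \<alpha>) has_sum (\<bar>x0 \<bullet> b0\<bar> + 1)) MI"
      by (rule has_sum_finite_neutralI[where B="{zmi, \<delta>}"]) (use \<delta>MI \<delta>z pw\<delta> in auto)
    thus "(\<lambda>\<alpha>. \<bar>?c \<alpha>\<bar> * pw 1 \<alpha>) summable_on MI" by (rule has_sum_imp_summable)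
    fix x :: 'a
    show "((\<lambda>\<alpha>. ?c \<alpha> * mon x0 x \<alpha>) has_sum x \<bullet> b0) MI"
      by (rule has_sum_finite_neutralI[where B="{zmi, \<delta>}"]) (use \<delta>MI \<delta>z mon\<delta> in \<open>auto simp: inner_diff_left\<close>)
  qed
  thus ?thesis unfolding AN_def by (intro exI[of _ 1]) auto
qed

lemma ANr_abs_has_sum: "ANr x0 g \<rho> c \<Longrightarrow> ((\<lambda>\<alpha>. \<bar>c \<alpha>\<bar> * pw \<rho> \<alpha>) has_sum infsum (\<lambda>\<alpha>. \<bar>c \<alpha>\<bar> * pw \<rho> \<alpha>) MI) MI"
  by (simp add: ANr_def)

lemma AN_add:
  assumes "AN x0 g1" "AN x0 g2"
  shows "AN x0 (\<lambda>x. g1 x + g2 x)"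
proof -
  obtain \<rho>1 c1 where 1: "\<rho>1 > 0" "ANr x0 g1 \<rho>1 c1" using assms(1) by (auto simp: AN_def)
  obtain \<rho>2 c2 where 2: "\<rho>2 > 0" "ANr x0 g2 \<rho>2 c2" using assms(2) by (auto simp: AN_def)
  define \<rho> where "\<rho> = min \<rho>1 \<rho>2"
  have \<rho>: "\<rho> > 0" using 1 2 by (simp add: \<rho>_def)
  have A1: "ANr x0 g1 \<rho> c1" by (rule ANr_mono[OF 1(2) \<rho>]) (simp add: \<rho>_def)
  have A2: "ANr x0 g2 \<rho> c2" by (rule ANr_mono[OF 2(2) \<rho>]) (simp add: \<rho>_def)
  have "ANr x0 (\<lambda>x. g1 x + g2 x) \<rho> (\<lambda>\<alpha>. c1 \<alpha> + c2 \<alpha>)"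
    unfolding ANr_def
  proof (intro conjI allI impI)
    show "(\<lambda>\<alpha>. \<bar>c1 \<alpha> + c2 \<alpha>\<bar> * pw \<rho> \<alpha>) summable_on MI"
    proof (rule summable_on_comparison_test)
      show "(\<lambda>\<alpha>. \<bar>c1 \<alpha>\<bar> * pw \<rho> \<alpha> + \<bar>c2 \<alpha>\<bar> * pw \<rho> \<alpha>) summable_on MI"
        using A1 A2 by (intro summable_on_add) (auto simp: ANr_def)
      show "\<bar>c1 \<alpha> + c2 \<alpha>\<bar> * pw \<rho> \<alpha> \<le> \<bar>c1 \<alpha>\<bar> * pw \<rho> \<alpha> + \<bar>c2 \<alpha>\<bar> * pw \<rho> \<alpha>" for \<alpha>
        using pw_nonneg[of \<rho> \<alpha>] \<rho> abs_triangle_ineq[of "c1 \<alpha>" "c2 \<alpha>"]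
        by (simp add: distrib_right[symmetric] mult_right_mono)
      show "0 \<le> \<bar>c1 \<alpha> + c2 \<alpha>\<bar> * pw \<rho> \<alpha>" for \<alpha> using pw_nonneg[of \<rho> \<alpha>] \<rho> by simp
    qed
    fix x :: 'a assume x: "\<forall>b\<in>Basis. \<bar>(x - x0) \<bullet> b\<bar> < \<rho>"
    have "((\<lambda>\<alpha>. c1 \<alpha> * mon x0 x \<alpha> + c2 \<alpha> * mon x0 x \<alpha>) has_sum (g1 x + g2 x)) MI"
      using A1 A2 x by (intro has_sum_add) (auto simp: ANr_def)
    thus "((\<lambda>\<alpha>. (c1 \<alpha> + c2 \<alpha>) * mon x0 x \<alpha>) has_sum (g1 x + g2 x)) MI"
      by (simp add: distrib_right)
  qed
  thus ?thesis using \<rho> unfolding AN_def by blast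
qed

lemma conv_mon:
  "(\<Sum>(\<alpha>, \<beta>)\<in>fib \<gamma>. (c1 \<alpha> * mon x0 x \<alpha>) * (c2 \<beta> * mon x0 x \<beta>)) = conv c1 c2 \<gamma> * mon x0 x \<gamma>"
proof -
  have "(\<Sum>(\<alpha>, \<beta>)\<in>fib \<gamma>. (c1 \<alpha> * mon x0 x \<alpha>) * (c2 \<beta> * mon x0 x \<beta>))
      = (\<Sum>(\<alpha>, \<beta>)\<in>fib \<gamma>. (c1 \<alpha> * c2 \<beta>) * mon x0 x \<gamma>)"
  proof (rule sum.cong[OF refl])
    fix p assume "p \<in> fib \<gamma>"
    then obtain \<alpha> \<beta> where p: "p = (\<alpha>, \<beta>)" "(\<lambda>b. \<alpha> b + \<beta> b) = \<gamma>" unfolding fib_def by blast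
    have "mon x0 x \<gamma> = mon x0 x \<alpha> * mon x0 x \<beta>" using mon_add[of x0 x \<alpha> \<beta>] p(2) by simp
    thus "(case p of (\<alpha>, \<beta>) \<Rightarrow> (c1 \<alpha> * mon x0 x \<alpha>) * (c2 \<beta> * mon x0 x \<beta>)) =
          (case p of (\<alpha>, \<beta>) \<Rightarrow> (c1 \<alpha> * c2 \<beta>) * mon x0 x \<gamma>)" using p(1) by simp
  qed
  also have "\<dots> = conv c1 c2 \<gamma> * mon x0 x \<gamma>"
    unfolding conv_def by (simp add: sum_distrib_right case_prod_unfold)
  finally show ?thesis .
qed

lemma conv_pw:
  "(\<Sum>(\<alpha>, \<beta>)\<in>fib \<gamma>. (c1 \<alpha> * pw \<rho> \<alpha>) * (c2 \<beta> * pw \<rho> \<beta>)) = conv c1 c2 \<gamma> * pw \<rho> \<gamma>"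
proof -
  have "(\<Sum>(\<alpha>, \<beta>)\<in>fib \<gamma>. (c1 \<alpha> * pw \<rho> \<alpha>) * (c2 \<beta> * pw \<rho> \<beta>))
      = (\<Sum>(\<alpha>, \<beta>)\<in>fib \<gamma>. (c1 \<alpha> * c2 \<beta>) * pw \<rho> \<gamma>)"
  proof (rule sum.cong[OF refl])
    fix p assume "p \<in> fib \<gamma>"
    then obtain \<alpha> \<beta> where p: "p = (\<alpha>, \<beta>)" "(\<lambda>b. \<alpha> b + \<beta> b) = \<gamma>" unfolding fib_def by blast
    have "pw \<rho> \<gamma> = pw \<rho> \<alpha> * pw \<rho> \<beta>" using pw_add[of \<rho> \<alpha> \<beta>] p(2) by simp
    thus "(case p of (\<alpha>, \<beta>) \<Rightarrow> (c1 \<alpha> * pw \<rho> \<alpha>) * (c2 \<beta> * pw \<rho> \<beta>)) =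
          (case p of (\<alpha>, \<beta>) \<Rightarrow> (c1 \<alpha> * c2 \<beta>) * pw \<rho> \<gamma>)" using p(1) by simp
  qed
  also have "\<dots> = conv c1 c2 \<gamma> * pw \<rho> \<gamma>"
    unfolding conv_def by (simp add: sum_distrib_right case_prod_unfold)
  finally show ?thesis .
qed

lemma abs_conv_le: "\<bar>conv c1 c2 \<gamma>\<bar> \<le> conv (\<lambda>\<alpha>. \<bar>c1 \<alpha>\<bar>) (\<lambda>\<alpha>. \<bar>c2 \<alpha>\<bar>) \<gamma>"
  unfolding conv_def case_prod_unfold
  by (rule order_trans[OF sum_abs]) (simp add: abs_mult)

lemma conv_mono:
  assumes "\<And>\<alpha>. 0 \<le> a \<alpha>" "\<And>\<beta>. b \<beta> \<le> b' \<beta>"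
  shows "conv a b \<gamma> \<le> conv a b' \<gamma>"
  unfolding conv_def case_prod_unfold
  by (rule sum_mono) (simp add: assms mult_left_mono)

lemma AN_mult:
  assumes "AN x0 g1" "AN x0 g2"
  shows "AN x0 (\<lambda>x. g1 x * g2 x)"
proof -
  obtain \<rho>1 c1 where 1: "\<rho>1 > 0" "ANr x0 g1 \<rho>1 c1" using assms(1) by (auto simp: AN_def)
  obtain \<rho>2 c2 where 2: "\<rho>2 > 0" "ANr x0 g2 \<rho>2 c2" using assms(2) by (auto simp: AN_def)
  define \<rho> where "\<rho> = min \<rho>1 \<rho>2"
  have \<rho>: "\<rho> > 0" using 1 2 by (simp add: \<rho>_def)
  have A1: "ANr x0 g1 \<rho> c1" by (rule ANr_mono[OF 1(2) \<rho>]) (simp add: \<rho>_def)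
  have A2: "ANr x0 g2 \<rho> c2" by (rule ANr_mono[OF 2(2) \<rho>]) (simp add: \<rho>_def)
  have "ANr x0 (\<lambda>x. g1 x * g2 x) \<rho> (conv c1 c2)"
    unfolding ANr_def
  proof (intro conjI allI impI)
    show "(\<lambda>\<alpha>. \<bar>conv c1 c2 \<alpha>\<bar> * pw \<rho> \<alpha>) summable_on MI"
    proof (rule summable_on_comparison_test)
      have "((\<lambda>\<gamma>. \<Sum>(\<alpha>, \<beta>)\<in>fib \<gamma>. (\<bar>c1 \<alpha>\<bar> * pw \<rho> \<alpha>) * (\<bar>c2 \<beta>\<bar> * pw \<rho> \<beta>)) has_sum
           infsum (\<lambda>\<alpha>. \<bar>c1 \<alpha>\<bar> * pw \<rho> \<alpha>) MI * infsum (\<lambda>\<alpha>. \<bar>c2 \<alpha>\<bar> * pw \<rho> \<alpha>) MI) MI"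
        by (rule cauchy[OF ANr_abs_has_sum[OF A1] ANr_abs_has_sum[OF A2]])
      hence "((\<lambda>\<gamma>. conv (\<lambda>\<alpha>. \<bar>c1 \<alpha>\<bar>) (\<lambda>\<alpha>. \<bar>c2 \<alpha>\<bar>) \<gamma> * pw \<rho> \<gamma>) has_sum
           infsum (\<lambda>\<alpha>. \<bar>c1 \<alpha>\<bar> * pw \<rho> \<alpha>) MI * infsum (\<lambda>\<alpha>. \<bar>c2 \<alpha>\<bar> * pw \<rho> \<alpha>) MI) MI"
        by (simp only: conv_pw)
      thus "(\<lambda>\<gamma>. conv (\<lambda>\<alpha>. \<bar>c1 \<alpha>\<bar>) (\<lambda>\<alpha>. \<bar>c2 \<alpha>\<bar>) \<gamma> * pw \<rho> \<gamma>) summable_on MI"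
        by (rule has_sum_imp_summable)
      show "\<bar>conv c1 c2 \<gamma>\<bar> * pw \<rho> \<gamma> \<le> conv (\<lambda>\<alpha>. \<bar>c1 \<alpha>\<bar>) (\<lambda>\<alpha>. \<bar>c2 \<alpha>\<bar>) \<gamma> * pw \<rho> \<gamma>" for \<gamma>
        using pw_nonneg[of \<rho> \<gamma>] \<rho> abs_conv_le[of c1 c2 \<gamma>] by (intro mult_right_mono) auto
      show "0 \<le> \<bar>conv c1 c2 \<gamma>\<bar> * pw \<rho> \<gamma>" for \<gamma> using pw_nonneg[of \<rho> \<gamma>] \<rho> by simp
    qed
    fix x :: 'a assume x: "\<forall>b\<in>Basis. \<bar>(x - x0) \<bullet> b\<bar> < \<rho>"
    have h1: "((\<lambda>\<alpha>. c1 \<alpha> * mon x0 x \<alpha>) has_sum g1 x) MI" using A1 x by (simp add: ANr_def)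
    have h2: "((\<lambda>\<alpha>. c2 \<alpha> * mon x0 x \<alpha>) has_sum g2 x) MI" using A2 x by (simp add: ANr_def)
    from cauchy[OF h1 h2]
    show "((\<lambda>\<gamma>. conv c1 c2 \<gamma> * mon x0 x \<gamma>) has_sum (g1 x * g2 x)) MI"
      by (simp only: conv_mon)
  qed
  thus ?thesis using \<rho> unfolding AN_def by blast
qed

lemma abs_infsum_le_real:
  fixes f :: "'b \<Rightarrow> real"
  shows "\<bar>infsum f A\<bar> \<le> infsum (\<lambda>x. \<bar>f x\<bar>) A"
proof (cases "f summable_on A")
  case True
  hence "(\<lambda>x. norm (f x)) summable_on A" using summable_on_iff_abs_summable_on_real by blast
  from norm_infsum_bound[OF this] show ?thesis by simp
next
  case False
  thus ?thesis by (simp add: infsum_not_exists infsum_nonneg)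
qed

lemma pw_small:
  assumes "0 < \<sigma>" "\<sigma> \<le> \<rho>" "\<alpha> \<in> MI" "\<alpha> \<noteq> zmi"
  shows "pw \<sigma> \<alpha> \<le> (\<sigma> / \<rho>) * pw \<rho> \<alpha>"
proof -
  obtain b0 where b0: "\<alpha> b0 \<noteq> 0" using assms(4) by (auto simp: zmi_def fun_eq_iff)
  with assms(3) have b0B: "b0 \<in> Basis" by (auto simp: MI_def)
  have \<rho>: "\<rho> > 0" using assms by simp
  let ?q = "\<sigma> / \<rho>"
  have q: "0 < ?q" "?q \<le> 1" using assms \<rho> by auto
  have "pw \<sigma> \<alpha> = (\<Prod>b\<in>Basis. ?q ^ \<alpha> b * \<rho> ^ \<alpha> b)"
    unfolding pw_def by (intro prod.cong refl) (use \<rho> in \<open>simp add: power_mult_distrib[symmetric]\<close>)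
  also have "\<dots> = (\<Prod>b\<in>Basis. ?q ^ \<alpha> b) * pw \<rho> \<alpha>" by (simp add: pw_def prod.distrib)
  also have "(\<Prod>b\<in>Basis. ?q ^ \<alpha> b) \<le> ?q"
  proof -
    have "(\<Prod>b\<in>Basis. ?q ^ \<alpha> b) = ?q ^ \<alpha> b0 * (\<Prod>b\<in>Basis - {b0}. ?q ^ \<alpha> b)"
      using b0B by (simp add: prod.remove)
    also have "\<dots> \<le> ?q ^ \<alpha> b0 * 1"
      using q by (intro mult_left_mono prod_le_1) (auto intro: power_le_one)
    also have "\<dots> \<le> ?q" using power_decreasing[of 1 "\<alpha> b0" ?q] q b0 by simp
    finally show ?thesis .
  qed
  hence "(\<Prod>b\<in>Basis. ?q ^ \<alpha> b) * pw \<rho> \<alpha> \<le> ?q * pw \<rho> \<alpha>"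
    using pw_nonneg[of \<rho> \<alpha>] \<rho> by (intro mult_right_mono) auto
  finally show ?thesis .
qed

lemma AN_compose:
  fixes g :: "'a::euclidean_space \<Rightarrow> real"
  assumes AG: "AN x0 g" and R: "R > 0"
    and ser: "\<And>t. \<bar>t\<bar> < R \<Longrightarrow> (\<lambda>n. p n * t ^ n) sums \<phi> (g x0 + t)"
  shows "AN x0 (\<lambda>x. \<phi> (g x))"
proof -
  obtain \<rho> c where \<rho>: "\<rho> > 0" and A: "ANr x0 g \<rho> c" using AG by (auto simp: AN_def)
  have g0: "g x0 = c zmi" by (rule ANr_center[OF A \<rho>])
  define d where "d = (\<lambda>\<alpha>. if \<alpha> = zmi then 0 else c \<alpha>)"
  define M where "M = infsum (\<lambda>\<alpha>. \<bar>c \<alpha>\<bar> * pw \<rho> \<alpha>) MI"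
  have csum: "(\<lambda>\<alpha>. \<bar>c \<alpha>\<bar> * pw \<rho> \<alpha>) summable_on MI" using A by (simp add: ANr_def)
  have M0: "M \<ge> 0" unfolding M_def by (intro infsum_nonneg) (simp add: pw_nonneg[OF less_imp_le[OF \<rho>]])
  define \<sigma> where "\<sigma> = \<rho> * R / (2 * (M + R))"
  have \<sigma>0: "\<sigma> > 0" using \<rho> R M0 by (simp add: \<sigma>_def)
  have q: "\<sigma> / \<rho> = R / (2 * (M + R))" using \<rho> by (simp add: \<sigma>_def)
  have q1: "R / (2 * (M + R)) \<le> 1" using R M0 by (simp add: field_simps)
  have \<sigma>\<rho>: "\<sigma> \<le> \<rho>"
  proof -
    have "\<sigma> = \<rho> * (R / (2 * (M + R)))" by (simp add: \<sigma>_def)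
    also have "\<dots> \<le> \<rho> * 1" using q1 \<rho> by (intro mult_left_mono) auto
    finally show ?thesis by simp
  qed
  have dle: "\<bar>d \<alpha>\<bar> * pw \<sigma> \<alpha> \<le> (\<sigma> / \<rho>) * (\<bar>c \<alpha>\<bar> * pw \<rho> \<alpha>)" if "\<alpha> \<in> MI" for \<alpha>
  proof (cases "\<alpha> = zmi")
    case True thus ?thesis using \<sigma>0 \<rho> pw_nonneg[of \<rho> \<alpha>] by (simp add: d_def)
  next
    case False
    have "\<bar>c \<alpha>\<bar> * pw \<sigma> \<alpha> \<le> \<bar>c \<alpha>\<bar> * ((\<sigma> / \<rho>) * pw \<rho> \<alpha>)"
      using pw_small[OF \<sigma>0 \<sigma>\<rho> that False] by (intro mult_left_mono) auto
    thus ?thesis using False by (simp add: d_def mult_ac)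
  qed
  have dnn: "0 \<le> \<bar>d \<alpha>\<bar> * pw \<sigma> \<alpha>" for \<alpha> using pw_nonneg[of \<sigma> \<alpha>] \<sigma>0 by simp
  have dsum: "(\<lambda>\<alpha>. \<bar>d \<alpha>\<bar> * pw \<sigma> \<alpha>) summable_on MI"
    by (rule summable_on_comparison_test[OF summable_on_cmult_right[OF csum, of "\<sigma>/\<rho>"]])
       (use dle dnn in auto)
  define m where "m = infsum (\<lambda>\<alpha>. \<bar>d \<alpha>\<bar> * pw \<sigma> \<alpha>) MI"
  have m0: "m \<ge> 0" unfolding m_def using dnn by (intro infsum_nonneg) auto
  have mM: "m \<le> (\<sigma> / \<rho>) * M"
  proof -
    have "m \<le> infsum (\<lambda>\<alpha>. (\<sigma> / \<rho>) * (\<bar>c \<alpha>\<bar> * pw \<rho> \<alpha>)) MI"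
      unfolding m_def by (rule infsum_mono[OF dsum summable_on_cmult_right[OF csum]]) (use dle in auto)
    also have "\<dots> = (\<sigma> / \<rho>) * M" unfolding M_def by (rule infsum_cmult_right) (use csum in auto)
    finally show ?thesis .
  qed
  have mR: "m < R"
  proof -
    have "(\<sigma> / \<rho>) * M = R * M / (2 * (M + R))" using q by simp
    also have "\<dots> < R"
    proof -
      have "0 < M * R + R * (R * 2)" using R M0 by (intro add_nonneg_pos mult_nonneg_nonneg mult_pos_pos) auto
      thus ?thesis using R M0 by (simp add: field_simps)
    qed
    finally show ?thesis using mM by simp
  qed
  have psum: "summable (\<lambda>n. \<bar>p n\<bar> * m ^ n)"
  proof -
    define t where "t = (m + R) / 2"
    have t: "\<bar>t\<bar> < R" "m < t" using m0 mR by (auto simp: t_def)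
    have "summable (\<lambda>n. p n * t ^ n)" using ser[OF t(1)] by (rule sums_summable)
    from powser_insidea[OF this, of m] have "summable (\<lambda>n. norm (p n * m ^ n))" using t m0 by simp
    thus ?thesis using m0 by (simp add: abs_mult)
  qed
  define e0 :: "('a \<Rightarrow> nat) \<Rightarrow> real" where "e0 = (\<lambda>\<alpha>. if \<alpha> = zmi then 1 else 0)"
  define dp where "dp = (\<lambda>n. ((conv d) ^^ n) e0)"
  define ap where "ap = (\<lambda>n. ((conv (\<lambda>\<alpha>. \<bar>d \<alpha>\<bar>)) ^^ n) e0)"
  have dp_le: "\<bar>dp n \<alpha>\<bar> \<le> ap n \<alpha>" for n \<alpha>
  proof (induction n arbitrary: \<alpha>)
    case 0 show ?case by (simp add: dp_def ap_def e0_def)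
  next
    case (Suc n)
    have "\<bar>dp (Suc n) \<alpha>\<bar> = \<bar>conv d (dp n) \<alpha>\<bar>" by (simp add: dp_def)
    also have "\<dots> \<le> conv (\<lambda>\<alpha>. \<bar>d \<alpha>\<bar>) (\<lambda>\<alpha>. \<bar>dp n \<alpha>\<bar>) \<alpha>" by (rule abs_conv_le)
    also have "\<dots> \<le> conv (\<lambda>\<alpha>. \<bar>d \<alpha>\<bar>) (ap n) \<alpha>" by (rule conv_mono) (use Suc in auto)
    also have "\<dots> = ap (Suc n) \<alpha>" by (simp add: ap_def)
    finally show ?case .
  qed
  have ap_nn: "0 \<le> ap n \<alpha>" for n \<alpha> using dp_le[of n \<alpha>] by linarith
  have e0_sum: "((\<lambda>\<alpha>. e0 \<alpha> * f \<alpha>) has_sum 1) MI" if "f zmi = 1" for f :: "('a \<Rightarrow> nat) \<Rightarrow> real"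
    by (rule has_sum_finite_neutralI[where B="{zmi}"]) (use that in \<open>auto simp: e0_def\<close>)
  have ap_sum: "((\<lambda>\<alpha>. ap n \<alpha> * pw \<sigma> \<alpha>) has_sum m ^ n) MI" for n
  proof (induction n)
    case 0 show ?case using e0_sum[of "pw \<sigma>"] by (simp add: ap_def)
  next
    case (Suc n)
    have dh: "((\<lambda>\<alpha>. \<bar>d \<alpha>\<bar> * pw \<sigma> \<alpha>) has_sum m) MI" unfolding m_def using dsum by simp
    from cauchy[OF dh Suc]
    show ?case by (simp only: conv_pw) (simp add: ap_def)
  qed
  have hsum: "((\<lambda>\<alpha>. d \<alpha> * mon x0 x \<alpha>) has_sum (g x - g x0)) MI"
    if x: "\<forall>b\<in>Basis. \<bar>(x - x0) \<bullet> b\<bar> < \<sigma>" for x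
  proof -
    have x': "\<forall>b\<in>Basis. \<bar>(x - x0) \<bullet> b\<bar> < \<rho>" using x \<sigma>\<rho> by force
    have "((\<lambda>\<alpha>. c \<alpha> * mon x0 x \<alpha>) has_sum g x) MI" using A x' by (simp add: ANr_def)
    moreover have "((\<lambda>\<alpha>. if \<alpha> = zmi then c zmi else 0) has_sum c zmi) MI" by (rule has_sum_single_zmi)
    ultimately have "((\<lambda>\<alpha>. c \<alpha> * mon x0 x \<alpha> - (if \<alpha> = zmi then c zmi else 0)) has_sum (g x - c zmi)) MI"
      by (rule has_sum_diff')
    moreover have "(\<lambda>\<alpha>. d \<alpha> * mon x0 x \<alpha>) = (\<lambda>\<alpha>. c \<alpha> * mon x0 x \<alpha> - (if \<alpha> = zmi then c zmi else 0))"
      by (rule ext) (simp add: d_def)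
    ultimately show ?thesis unfolding g0 by simp
  qed
  have dp_sum: "((\<lambda>\<alpha>. dp n \<alpha> * mon x0 x \<alpha>) has_sum (g x - g x0) ^ n) MI"
    if x: "\<forall>b\<in>Basis. \<bar>(x - x0) \<bullet> b\<bar> < \<sigma>" for x n
  proof (induction n)
    case 0 show ?case using e0_sum[of "mon x0 x"] by (simp add: dp_def)
  next
    case (Suc n)
    from cauchy[OF hsum[OF x] Suc]
    show ?case by (simp only: conv_mon) (simp add: dp_def)
  qed
  have habs: "\<bar>g x - g x0\<bar> \<le> m" if x: "\<forall>b\<in>Basis. \<bar>(x - x0) \<bullet> b\<bar> < \<sigma>" for x
  proof -
    have le: "\<bar>d \<alpha> * mon x0 x \<alpha>\<bar> \<le> \<bar>d \<alpha>\<bar> * pw \<sigma> \<alpha>" for \<alpha>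
      using abs_mon_le[of x x0 \<sigma> \<alpha>] x by (simp add: abs_mult mult_left_mono less_imp_le)
    have mh: "((\<lambda>\<alpha>. \<bar>d \<alpha>\<bar> * pw \<sigma> \<alpha>) has_sum m) MI" unfolding m_def using dsum by simp
    have "g x - g x0 \<le> m"
      by (rule has_sum_mono[OF hsum[OF x] mh]) (use le in \<open>auto simp: abs_le_iff\<close>)
    moreover have hneg: "((\<lambda>\<alpha>. - (d \<alpha> * mon x0 x \<alpha>)) has_sum -(g x - g x0)) MI"
      using hsum[OF x] by (simp add: has_sum_uminus)
    moreover have "-(g x - g x0) \<le> m"
      by (rule has_sum_mono[OF hneg mh])
         (use le in \<open>auto simp: abs_le_iff\<close>)
    ultimately show ?thesis by linarith
  qed
  define B where "B = (\<lambda>n \<alpha>. \<bar>p n\<bar> * (ap n \<alpha> * pw \<sigma> \<alpha>))"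
  have Bnn: "0 \<le> B n \<alpha>" for n \<alpha> unfolding B_def
    by (intro mult_nonneg_nonneg) (auto simp: ap_nn pw_nonneg[OF less_imp_le[OF \<sigma>0]])
  have Bsum: "(\<lambda>(n, \<alpha>). B n \<alpha>) summable_on UNIV \<times> MI"
  proof (rule summable_on_SigmaI[where g="\<lambda>n. \<bar>p n\<bar> * m ^ n"])
    show "((\<lambda>\<alpha>. (\<lambda>(n, \<alpha>). B n \<alpha>) (n, \<alpha>)) has_sum \<bar>p n\<bar> * m ^ n) MI" for n
      unfolding B_def using has_sum_cmult_right[OF ap_sum[of n], of "\<bar>p n\<bar>"] by simp
    show "(\<lambda>n. \<bar>p n\<bar> * m ^ n) summable_on UNIV"
      by (rule summable_nonneg_imp_summable_on[OF psum]) (use m0 in simp)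
    show "0 \<le> (\<lambda>(n, \<alpha>). B n \<alpha>) (n, \<alpha>)" for n \<alpha> using Bnn by simp
  qed
  have Bswap: "(\<lambda>(\<alpha>, n). B n \<alpha>) summable_on MI \<times> UNIV"
    using Bsum summable_on_swap[of "\<lambda>(n, \<alpha>). B n \<alpha>" UNIV MI] by (simp add: case_prod_unfold)
  have Bfib: "(\<lambda>n. B n \<alpha>) summable_on UNIV" if "\<alpha> \<in> MI" for \<alpha>
    using summable_on_SigmaD1[of "\<lambda>\<alpha> n. B n \<alpha>" MI "\<lambda>_. UNIV" \<alpha>] Bswap that by simp
  have Bout: "(\<lambda>\<alpha>. infsum (\<lambda>n. B n \<alpha>) UNIV) summable_on MI"
    using summable_on_SigmaD[of "\<lambda>(\<alpha>, n). B n \<alpha>" MI "\<lambda>_. UNIV"] Bswap Bfib by simp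
  define e where "e = (\<lambda>\<alpha>. infsum (\<lambda>n. p n * dp n \<alpha>) UNIV)"
  have pdsum: "(\<lambda>n. p n * dp n \<alpha>) summable_on UNIV" if "\<alpha> \<in> MI" for \<alpha>
  proof -
    have pwp: "pw \<sigma> \<alpha> > 0" using pw_pos[OF \<sigma>0] .
    have "(\<lambda>n. B n \<alpha> * (1 / pw \<sigma> \<alpha>)) summable_on UNIV" by (rule summable_on_cmult_left[OF Bfib[OF that]])
    moreover have "B n \<alpha> * (1 / pw \<sigma> \<alpha>) = \<bar>p n\<bar> * ap n \<alpha>" for n using pwp by (simp add: B_def)
    ultimately have s: "(\<lambda>n. \<bar>p n\<bar> * ap n \<alpha>) summable_on UNIV" by simp
    have "(\<lambda>n. norm (p n * dp n \<alpha>)) summable_on UNIV"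
      by (rule Infinite_Sum.abs_summable_on_comparison_test'[OF s]) (simp add: abs_mult dp_le mult_left_mono)
    thus ?thesis using summable_on_iff_abs_summable_on_real by blast
  qed
  have "ANr x0 (\<lambda>x. \<phi> (g x)) \<sigma> e"
    unfolding ANr_def
  proof (intro conjI allI impI)
    show "(\<lambda>\<alpha>. \<bar>e \<alpha>\<bar> * pw \<sigma> \<alpha>) summable_on MI"
    proof (rule summable_on_comparison_test[OF Bout])
      fix \<alpha> :: "'a \<Rightarrow> nat" assume \<alpha>: "\<alpha> \<in> MI"
      have pwp: "pw \<sigma> \<alpha> > 0" using pw_pos[OF \<sigma>0] .
      have s: "(\<lambda>n. \<bar>p n\<bar> * ap n \<alpha>) summable_on UNIV"
      proof -
        have "(\<lambda>n. B n \<alpha> * (1 / pw \<sigma> \<alpha>)) summable_on UNIV" by (rule summable_on_cmult_left[OF Bfib[OF \<alpha>]])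
        moreover have "B n \<alpha> * (1 / pw \<sigma> \<alpha>) = \<bar>p n\<bar> * ap n \<alpha>" for n using pwp by (simp add: B_def)
        ultimately show ?thesis by simp
      qed
      have sa: "(\<lambda>n. \<bar>p n * dp n \<alpha>\<bar>) summable_on UNIV"
        using pdsum[OF \<alpha>] summable_on_iff_abs_summable_on_real[of "\<lambda>n. p n * dp n \<alpha>" UNIV] by simp
      have "\<bar>e \<alpha>\<bar> \<le> infsum (\<lambda>n. \<bar>p n * dp n \<alpha>\<bar>) UNIV" unfolding e_def by (rule abs_infsum_le_real)
      also have "\<dots> \<le> infsum (\<lambda>n. \<bar>p n\<bar> * ap n \<alpha>) UNIV"
        by (rule infsum_mono[OF sa s]) (simp add: abs_mult dp_le mult_left_mono)
      finally have "\<bar>e \<alpha>\<bar> * pw \<sigma> \<alpha> \<le> infsum (\<lambda>n. \<bar>p n\<bar> * ap n \<alpha>) UNIV * pw \<sigma> \<alpha>"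
        using pwp by (intro mult_right_mono) auto
      also have "\<dots> = infsum (\<lambda>n. \<bar>p n\<bar> * ap n \<alpha> * pw \<sigma> \<alpha>) UNIV"
        by (rule infsum_cmult_left[symmetric]) (use s in auto)
      also have "\<dots> = infsum (\<lambda>n. B n \<alpha>) UNIV" by (simp add: B_def mult_ac)
      finally show "\<bar>e \<alpha>\<bar> * pw \<sigma> \<alpha> \<le> infsum (\<lambda>n. B n \<alpha>) UNIV" .
      show "0 \<le> \<bar>e \<alpha>\<bar> * pw \<sigma> \<alpha>" using pwp by simp
    qed
    fix x :: 'a assume x: "\<forall>b\<in>Basis. \<bar>(x - x0) \<bullet> b\<bar> < \<sigma>"
    define F where "F = (\<lambda>n \<alpha>. p n * (dp n \<alpha> * mon x0 x \<alpha>))"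
    have FB: "\<bar>F n \<alpha>\<bar> \<le> B n \<alpha>" for n \<alpha>
    proof -
      have "\<bar>dp n \<alpha> * mon x0 x \<alpha>\<bar> \<le> ap n \<alpha> * pw \<sigma> \<alpha>"
        unfolding abs_mult using dp_le[of n \<alpha>] abs_mon_le[of x x0 \<sigma> \<alpha>] x
        by (intro mult_mono) (auto simp: less_imp_le ap_nn)
      thus ?thesis unfolding F_def B_def abs_mult[of "p n"] by (intro mult_left_mono) auto
    qed
    have Fsum: "(\<lambda>(n, \<alpha>). F n \<alpha>) summable_on UNIV \<times> MI"
    proof -
      have "(\<lambda>q. norm ((\<lambda>(n, \<alpha>). F n \<alpha>) q)) summable_on UNIV \<times> MI"
        by (rule Infinite_Sum.abs_summable_on_comparison_test'[OF Bsum]) (auto simp: FB)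
      thus ?thesis using summable_on_iff_abs_summable_on_real by blast
    qed
    define S where "S = infsum (\<lambda>(n, \<alpha>). F n \<alpha>) (UNIV \<times> MI)"
    have FS: "((\<lambda>(n, \<alpha>). F n \<alpha>) has_sum S) (UNIV \<times> MI)" unfolding S_def using Fsum by simp
    have "((\<lambda>n. p n * (g x - g x0) ^ n) has_sum S) UNIV"
    proof (rule has_sum_SigmaD[OF FS])
      fix n :: nat
      show "((\<lambda>\<alpha>. (\<lambda>(n, \<alpha>). F n \<alpha>) (n, \<alpha>)) has_sum p n * (g x - g x0) ^ n) MI"
        unfolding F_def using has_sum_cmult_right[OF dp_sum[OF x, of n], of "p n"] by simp
    qed
    hence "(\<lambda>n. p n * (g x - g x0) ^ n) sums S" by (rule has_sum_imp_sums)
    moreover have "(\<lambda>n. p n * (g x - g x0) ^ n) sums \<phi> (g x0 + (g x - g x0))"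
      by (rule ser) (use habs[OF x] mR in linarith)
    ultimately have S: "S = \<phi> (g x)" using sums_unique2 by fastforce
    have FS': "((\<lambda>(\<alpha>, n). F n \<alpha>) has_sum S) (MI \<times> UNIV)"
      using FS has_sum_swap[of "\<lambda>(n, \<alpha>). F n \<alpha>" UNIV MI S] by (simp add: case_prod_unfold)
    have "((\<lambda>\<alpha>. e \<alpha> * mon x0 x \<alpha>) has_sum S) MI"
    proof (rule has_sum_SigmaD[OF FS'])
      fix \<alpha> :: "'a \<Rightarrow> nat" assume \<alpha>: "\<alpha> \<in> MI"
      have "((\<lambda>n. p n * dp n \<alpha>) has_sum e \<alpha>) UNIV" unfolding e_def using pdsum[OF \<alpha>] by simp
      from has_sum_cmult_left[OF this, of "mon x0 x \<alpha>"]
      show "((\<lambda>n. (\<lambda>(\<alpha>, n). F n \<alpha>) (\<alpha>, n)) has_sum e \<alpha> * mon x0 x \<alpha>) UNIV"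
        by (simp add: F_def mult_ac)
    qed
    thus "((\<lambda>\<alpha>. e \<alpha> * mon x0 x \<alpha>) has_sum \<phi> (g x)) MI" using S by simp
  qed
  thus ?thesis using \<sigma>0 unfolding AN_def by blast
qed

lemma AN_sqrt:
  assumes "AN x0 g" "g x0 > 0"
  shows "AN x0 (\<lambda>x. sqrt (g x))"
proof (rule AN_compose[OF assms(1) assms(2)])
  fix t :: real assume "\<bar>t\<bar> < g x0"
  from sqrt_series'[OF this]
  show "(\<lambda>n. ((1/2) gchoose n) * g x0 powr (1/2 - real n) * t ^ n) sums sqrt (g x0 + t)" .
qed

lemma AN_inverse:
  assumes "AN x0 g" "g x0 > 0"
  shows "AN x0 (\<lambda>x. inverse (g x))"
proof (rule AN_compose[OF assms(1) assms(2)])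
  fix t :: real assume t: "\<bar>t\<bar> < g x0"
  let ?a = "g x0"
  have a: "?a > 0" by fact
  have "\<bar>- t / ?a\<bar> < 1" using t a by (simp add: abs_div)
  from geometric_sums[OF this[unfolded real_norm_def[symmetric]]]
  have "(\<lambda>n. (- t / ?a) ^ n) sums (1 / (1 - (- t / ?a)))" .
  from sums_mult[OF this, of "1 / ?a"]
  have "(\<lambda>n. 1 / ?a * (- t / ?a) ^ n) sums (1 / ?a * (1 / (1 - (- t / ?a))))" .
  moreover have "1 / ?a * (1 / (1 - (- t / ?a))) = inverse (?a + t)"
    using a t by (simp add: field_simps)
  moreover have "(\<lambda>n. 1 / ?a * (- t / ?a) ^ n) = (\<lambda>n. (1 / ?a * (-1 / ?a) ^ n) * t ^ n)"
  proof
    fix n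
    have "- t / ?a = (-1 / ?a) * t" by simp
    thus "1 / ?a * (- t / ?a) ^ n = (1 / ?a * (-1 / ?a) ^ n) * t ^ n"
      by (simp only: power_mult_distrib mult.assoc)
  qed
  ultimately show "(\<lambda>n. (1 / ?a * (-1 / ?a) ^ n) * t ^ n) sums inverse (?a + t)" by (simp only:)
qed

lemma AN_diff:
  assumes "AN x0 g1" "AN x0 g2"
  shows "AN x0 (\<lambda>x. g1 x - g2 x)"
proof -
  have "AN x0 (\<lambda>x. g1 x + (-1) * g2 x)" by (intro AN_add AN_mult AN_const assms)
  thus ?thesis by simp
qed

lemma has_sum_sum_fin:
  fixes f :: "'i \<Rightarrow> 'b \<Rightarrow> 'c::{topological_comm_monoid_add}"
  assumes "finite I" "\<And>i. i \<in> I \<Longrightarrow> (f i has_sum s i) A"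
  shows "((\<lambda>x. \<Sum>i\<in>I. f i x) has_sum (\<Sum>i\<in>I. s i)) A"
  using assms
proof (induction I rule: finite_induct)
  case empty show ?case by simp
next
  case (insert i I)
  have "((\<lambda>x. f i x + (\<Sum>i\<in>I. f i x)) has_sum (s i + (\<Sum>i\<in>I. s i))) A"
    by (intro has_sum_add insert.prems insert.IH) auto
  thus ?case using insert.hyps by simp
qed

lemma real_analytic_onI:
  fixes f :: "'a::euclidean_space \<Rightarrow> 'b::euclidean_space"
  assumes an: "\<And>x0 b. x0 \<in> U \<Longrightarrow> b \<in> Basis \<Longrightarrow> AN x0 (\<lambda>x. f x \<bullet> b)"
  shows "real_analytic_on U f"
  unfolding real_analytic_on_def
proof
  fix x0 assume x0: "x0 \<in> U"
  have "\<forall>b\<in>(Basis::'b set). \<exists>rc. fst rc > 0 \<and> ANr x0 (\<lambda>x. f x \<bullet> b) (fst rc) (snd rc)"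
  proof
    fix b :: 'b assume "b \<in> Basis"
    from an[OF x0 this] obtain \<rho> c where "\<rho> > 0" "ANr x0 (\<lambda>x. f x \<bullet> b) \<rho> c" by (auto simp: AN_def)
    thus "\<exists>rc. fst rc > 0 \<and> ANr x0 (\<lambda>x. f x \<bullet> b) (fst rc) (snd rc)" by (intro exI[of _ "(\<rho>, c)"]) simp
  qed
  then obtain RC where RC: "\<And>b. b \<in> Basis \<Longrightarrow> fst (RC b) > 0 \<and> ANr x0 (\<lambda>x. f x \<bullet> b) (fst (RC b)) (snd (RC b))"
    by metis
  define r0 where "r0 = Min ((\<lambda>b. fst (RC b)) ` (Basis::'b set))"
  have r0: "r0 > 0" unfolding r0_def using RC by (subst Min_gr_iff) auto
  have A: "ANr x0 (\<lambda>x. f x \<bullet> b) r0 (snd (RC b))" if b: "b \<in> Basis" for b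
    by (rule ANr_mono[OF conjunct2[OF RC[OF b]] r0]) (unfold r0_def, rule Min_le, use b in auto)
  define C where "C = (\<lambda>\<alpha>. \<Sum>b\<in>(Basis::'b set). snd (RC b) \<alpha> *\<^sub>R b)"
  show "\<exists>\<rho>>0. \<exists>c :: ('a \<Rightarrow> nat) \<Rightarrow> 'b. \<forall>x\<in>ball x0 \<rho>.
          ((\<lambda>\<alpha>. (\<Prod>b\<in>Basis. ((x - x0) \<bullet> b) ^ \<alpha> b) *\<^sub>R c \<alpha>) has_sum f x)
            {\<alpha>. \<forall>b. b \<notin> Basis \<longrightarrow> \<alpha> b = 0}"
  proof (intro exI[of _ r0] conjI r0 exI[of _ C] ballI)
    fix x assume "x \<in> ball x0 r0"
    hence nx: "norm (x - x0) < r0" by (simp add: dist_norm norm_minus_commute)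
    have xb: "\<forall>b\<in>Basis. \<bar>(x - x0) \<bullet> b\<bar> < r0" using Basis_le_norm nx by (meson le_less_trans)
    have "((\<lambda>\<alpha>. \<Sum>b\<in>(Basis::'b set). (snd (RC b) \<alpha> * mon x0 x \<alpha>) *\<^sub>R b) has_sum (\<Sum>b\<in>Basis. (f x \<bullet> b) *\<^sub>R b)) MI"
    proof (rule has_sum_sum_fin)
      fix b :: 'b assume b: "b \<in> Basis"
      have "((\<lambda>\<alpha>. snd (RC b) \<alpha> * mon x0 x \<alpha>) has_sum f x \<bullet> b) MI" using A[OF b] xb by (simp add: ANr_def)
      from has_sum_bounded_linear[OF bounded_linear_scaleR_left this]
      show "((\<lambda>\<alpha>. (snd (RC b) \<alpha> * mon x0 x \<alpha>) *\<^sub>R b) has_sum (f x \<bullet> b) *\<^sub>R b) MI" .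
    qed simp
    moreover have "(\<lambda>\<alpha>. \<Sum>b\<in>(Basis::'b set). (snd (RC b) \<alpha> * mon x0 x \<alpha>) *\<^sub>R b)
        = (\<lambda>\<alpha>. (\<Prod>b\<in>Basis. ((x - x0) \<bullet> b) ^ \<alpha> b) *\<^sub>R C \<alpha>)"
      by (rule ext) (simp add: C_def mon_def scaleR_sum_right mult.commute)
    ultimately show "((\<lambda>\<alpha>. (\<Prod>b\<in>Basis. ((x - x0) \<bullet> b) ^ \<alpha> b) *\<^sub>R C \<alpha>) has_sum f x)
            {\<alpha>. \<forall>b. b \<notin> Basis \<longrightarrow> \<alpha> b = 0}"
      by (simp add: euclidean_representation MI_def)
  qed
qed

lemma AN_pow2: "AN x0 g \<Longrightarrow> AN x0 (\<lambda>x. (g x)\<^sup>2)"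
  using AN_mult[of x0 g g] by (simp add: power2_eq_square)

lemma AN_divide: "AN x0 g1 \<Longrightarrow> AN x0 g2 \<Longrightarrow> g2 x0 > 0 \<Longrightarrow> AN x0 (\<lambda>x. g1 x / g2 x)"
  using AN_mult[OF _ AN_inverse, of x0 g1 g2] by (simp add: divide_inverse)

lemma basis_pv:
  assumes "b \<in> (Basis :: ((real^'e::finite) \<times> (real^'v::finite)) set)"
  shows "(\<exists>e. b = (axis e 1, 0)) \<or> (\<exists>v. b = (0, axis v 1))"
  using assms unfolding Basis_prod_def Basis_vec_def by auto

lemma inner_fst_axis: "(z :: (real^'e::finite) \<times> (real^'v::finite)) \<bullet> (axis e 1, 0) = fst z $ e"
  by (cases z) (simp add: inner_axis)

lemma inner_snd_axis: "(z :: (real^'e::finite) \<times> (real^'v::finite)) \<bullet> (0, axis v 1) = snd z $ v"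
  by (cases z) (simp add: inner_axis)

lemma AN_fst: "AN z0 (\<lambda>z :: (real^'e::finite) \<times> (real^'v::finite). fst z $ e)"
proof -
  have "(axis e 1, 0) \<in> (Basis :: ((real^'e) \<times> (real^'v)) set)"
    unfolding Basis_prod_def by (rule UnI1) (rule imageI, simp)
  from AN_coord[OF this, of z0] show ?thesis by (simp add: inner_fst_axis)
qed

lemma AN_snd: "AN z0 (\<lambda>z :: (real^'e::finite) \<times> (real^'v::finite). snd z $ v)"
proof -
  have "(0, axis v 1) \<in> (Basis :: ((real^'e) \<times> (real^'v)) set)"
    unfolding Basis_prod_def by (rule UnI2) (rule imageI, simp)
  from AN_coord[OF this, of z0] show ?thesis by (simp add: inner_snd_axis)
qed

lemma P_pos:
  fixes I :: "real^'e::finite" and r :: "real^'v::finite"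
  assumes "r $ i > 0" "r $ j > 0" "I $ e > 1"
  shows "0 < (r $ i)\<^sup>2 + (r $ j)\<^sup>2 + 2 * I $ e * r $ i * r $ j"
proof -
  have "0 < 2 * I $ e * r $ i * r $ j" using assms by (intro mult_pos_pos) auto
  moreover have "0 \<le> (r $ i)\<^sup>2 + (r $ j)\<^sup>2" by simp
  ultimately show ?thesis by linarith
qed

lemma Lf_nth: "Lf ends I r $ e = sqrt ((r $ fst (ends e))\<^sup>2 + (r $ snd (ends e))\<^sup>2
    + 2 * I $ e * r $ fst (ends e) * r $ snd (ends e))"
  by (simp add: Lf_def case_prod_unfold Let_def)

theorem proposition2p15:
  fixes ends :: "'e::finite \<Rightarrow> 'v::finite \<times> 'v"
    and fedges :: "'f::finite \<Rightarrow> 'e \<times> 'e \<times> 'e"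
  assumes "triangulation_data ends fedges"
  shows "Lf_tilde ends ` Qf ends fedges \<subseteq> RDelta fedges \<times> {r. \<forall>v. r$v > 0}
       \<and> inj_on (Lf_tilde ends) (Qf ends fedges)
       \<and> (\<exists>G. homeomorphism (Qf ends fedges) (Lf_tilde ends ` Qf ends fedges) (Lf_tilde ends) G
              \<and> real_analytic_on (Qf ends fedges) (Lf_tilde ends)
              \<and> real_analytic_on (Lf_tilde ends ` Qf ends fedges) G)"
proof -
  let ?Q = "Qf ends fedges"
  let ?T = "Lf_tilde ends"
  define G where "G = (\<lambda>w :: (real^'e) \<times> (real^'v).
     ((\<chi> e. ((fst w $ e)\<^sup>2 - (snd w $ fst (ends e))\<^sup>2 - (snd w $ snd (ends e))\<^sup>2)
             / (2 * snd w $ fst (ends e) * snd w $ snd (ends e))), snd w))"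
  have Tform: "?T = (\<lambda>z. ((\<chi> e. sqrt ((snd z $ fst (ends e))\<^sup>2 + (snd z $ snd (ends e))\<^sup>2
    + 2 * fst z $ e * snd z $ fst (ends e) * snd z $ snd (ends e))), snd z))"
    by (rule ext) (simp add: Lf_tilde_def case_prod_unfold vec_eq_iff Lf_nth)
  have Qmem: "z \<in> ?Q \<longleftrightarrow> (\<forall>e. fst z $ e > 1) \<and> (\<forall>v. snd z $ v > 0) \<and> Lf ends (fst z) (snd z) \<in> RDelta fedges" for z
    by (cases z) (simp add: Qf_def)
  have part1: "?T ` ?Q \<subseteq> RDelta fedges \<times> {r. \<forall>v. r$v > 0}"
    using Qmem by (auto simp: Lf_tilde_def case_prod_unfold)
  have GT: "G (?T z) = z" if z: "z \<in> ?Q" for z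
  proof -
    have I1: "\<And>e. fst z $ e > 1" and r0: "\<And>v. snd z $ v > 0" using z Qmem by auto
    have "fst (G (?T z)) $ e = fst z $ e" for e
    proof -
      let ?i = "fst (ends e)" and ?j = "snd (ends e)" and ?I = "fst z" and ?r = "snd z"
      let ?P = "(?r $ ?i)\<^sup>2 + (?r $ ?j)\<^sup>2 + 2 * ?I $ e * ?r $ ?i * ?r $ ?j"
      have P: "0 < ?P" by (rule P_pos) (use I1 r0 in auto)
      have den: "0 < 2 * ?r $ ?i * ?r $ ?j" using r0 by simp
      have "fst (G (?T z)) $ e = ((sqrt ?P)\<^sup>2 - (?r $ ?i)\<^sup>2 - (?r $ ?j)\<^sup>2) / (2 * ?r $ ?i * ?r $ ?j)"
        by (simp add: G_def Tform)
      also have "\<dots> = (2 * ?I $ e * ?r $ ?i * ?r $ ?j) / (2 * ?r $ ?i * ?r $ ?j)"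
        using P by simp
      also have "\<dots> = (?I $ e * (2 * ?r $ ?i * ?r $ ?j)) / (2 * ?r $ ?i * ?r $ ?j)"
        by (simp add: mult_ac)
      also have "\<dots> = ?I $ e"
      proof -
        have dn: "2 * ?r $ ?i * ?r $ ?j \<noteq> 0" using den by linarith
        show ?thesis by (rule nonzero_mult_div_cancel_right[OF dn])
      qed
      finally show ?thesis .
    qed
    hence "fst (G (?T z)) = fst z" by (simp add: vec_eq_iff)
    moreover have "snd (G (?T z)) = snd z" by (simp add: G_def Tform)
    ultimately show ?thesis by (simp add: prod_eq_iff)
  qed
  have inj: "inj_on ?T ?Q" by (rule inj_on_inverseI[where g=G]) (rule GT)
  have contT: "continuous_on ?Q ?T" unfolding Tform by (intro continuous_intros)
  have rpos: "snd w $ v > 0" if "w \<in> ?T ` ?Q" for w v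
    using that Qmem by (auto simp: Lf_tilde_def case_prod_unfold)
  have nz: "2 * snd w $ fst (ends e) * snd w $ snd (ends e) \<noteq> 0" if "w \<in> ?T ` ?Q" for w e
  proof -
    have "0 < 2 * snd w $ fst (ends e) * snd w $ snd (ends e)" using rpos[OF that] by simp
    thus ?thesis by linarith
  qed
  have contG: "continuous_on (?T ` ?Q) G"
    unfolding G_def by (intro continuous_intros) (use nz in auto)
  have homeo: "homeomorphism ?Q (?T ` ?Q) ?T G"
  proof (rule homeomorphismI[OF contT contG])
    show "?T ` ?Q \<subseteq> ?T ` ?Q" by simp
    show "G ` (?T ` ?Q) \<subseteq> ?Q" using GT by auto
    show "\<And>x. x \<in> ?Q \<Longrightarrow> G (?T x) = x" by (rule GT)
    show "\<And>y. y \<in> ?T ` ?Q \<Longrightarrow> ?T (G y) = y" using GT by auto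
  qed
  have anT: "real_analytic_on ?Q ?T"
  proof (rule real_analytic_onI)
    fix z0 and b :: "(real^'e) \<times> (real^'v)" assume z0: "z0 \<in> ?Q" and b: "b \<in> Basis"
    have I1: "\<And>e. fst z0 $ e > 1" and r0: "\<And>v. snd z0 $ v > 0" using z0 Qmem by auto
    from basis_pv[OF b] show "AN z0 (\<lambda>z. ?T z \<bullet> b)"
    proof
      assume "\<exists>e. b = (axis e 1, 0)"
      then obtain e where be: "b = (axis e 1, 0)" by blast
      let ?i = "fst (ends e)" and ?j = "snd (ends e)"
      have "AN z0 (\<lambda>z. sqrt ((snd z $ ?i)\<^sup>2 + (snd z $ ?j)\<^sup>2 + 2 * fst z $ e * snd z $ ?i * snd z $ ?j))"
        by (intro AN_sqrt AN_add AN_mult AN_pow2 AN_const AN_fst AN_snd P_pos I1 r0)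
      thus ?thesis unfolding be inner_fst_axis by (simp add: Tform)
    next
      assume "\<exists>v. b = (0, axis v 1)"
      then obtain v where bv: "b = (0, axis v 1)" by blast
      show ?thesis unfolding bv inner_snd_axis by (simp add: Tform AN_snd)
    qed
  qed
  have anG: "real_analytic_on (?T ` ?Q) G"
  proof (rule real_analytic_onI)
    fix w0 and b :: "(real^'e) \<times> (real^'v)" assume w0: "w0 \<in> ?T ` ?Q" and b: "b \<in> Basis"
    from basis_pv[OF b] show "AN w0 (\<lambda>w. G w \<bullet> b)"
    proof
      assume "\<exists>e. b = (axis e 1, 0)"
      then obtain e where be: "b = (axis e 1, 0)" by blast
      let ?i = "fst (ends e)" and ?j = "snd (ends e)"
      have den: "0 < 2 * snd w0 $ ?i * snd w0 $ ?j" using rpos[OF w0] by simp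
      have "AN w0 (\<lambda>w. ((fst w $ e)\<^sup>2 - (snd w $ ?i)\<^sup>2 - (snd w $ ?j)\<^sup>2) / (2 * snd w $ ?i * snd w $ ?j))"
        by (intro AN_divide AN_diff AN_mult AN_pow2 AN_const AN_fst AN_snd den)
      thus ?thesis unfolding be inner_fst_axis by (simp add: G_def)
    next
      assume "\<exists>v. b = (0, axis v 1)"
      then obtain v where bv: "b = (0, axis v 1)" by blast
      show ?thesis unfolding bv inner_snd_axis by (simp add: G_def AN_snd)
    qed
  qed
  show ?thesis using part1 inj homeo anT anG by blast
qed

end
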